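(* Let $\Gamma$ be a countable group with a covering family $\mathcal E$ of malnormal subgroups and $\alpha>0$ such that $\Gamma$ satisfies $\mathbf K\geq_{\text{local}}\alpha$ relatively to $\mathcal E$. There exists $\bar\delta=\bar\delta(\alpha)>0$ such that for any path connected component $R$ of $[\mathcal S^*(\Gamma)/\Gamma]^{\leq\bar\delta}$ and any base point $r_0\in R$, there is $H_R\in\mathcal E$ such that $\iota_*(\pi_1(R,r_0))$ is a subgroup of $H_R$, where $\iota:R\to\mathcal S^*(\Gamma)/\Gamma$ is the inclusion and $\pi_1(\mathcal S^*(\Gamma)/\Gamma,\iota(r_0))$ is identified with $\Gamma$ (by a fixed identification, well defined up to conjugacy).
   Context: Let $\mathbf H$ be the separable infinite-dimensional real Hilbert space; $\mathcal S(\Gamma)$ is the unit sphere of $\ell^2(\Gamma,\mathbf H)$ with $\Gamma$ acting by $(\gamma.f)(x)=f(\gamma^{-1}x)$, $\mathcal S^*(\Gamma)=\{f:\gamma.f\ne f\ \forall\gamma\neq e\}$, and $\mathcal S^*(\Gamma)/\Gamma$ (quotient $\ell^2$ metric) is a classifying space for $\Gamma$, so its fundamental group is isomorphic to $\Gamma$. Thin part: with $\Pi$ the projection and $\mathbf d$ the $\ell^2$ distance, $[\mathcal S^*(\Gamma)/\Gamma]^{\leq\delta}=\Pi(\{x\in\mathcal S^*(\Gamma):\mathbf d(x,\gamma.x)\le\delta\text{ for some }\gamma\in\Gamma\setminus\{e\}\})$. For a group $G$ with regular representation $\rho_G$ on $\ell^2(G)$ and finite $S\subset G$, $\mathbf K(\rho_G,G,S)=\inf_{u\neq0}\max_{s\in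 S}\|s.u-u\|_{\ell^2}/\|u\|_{\ell^2}$. A subgroup $H$ is malnormal if $gHg^{-1}\cap H=\{e\}$ for $g\notin H$; $\mathcal E$ is covering if every element of $\Gamma$ lies in some member of $\mathcal E$; $\Gamma$ satisfies $\mathbf K\geq_{\text{local}}\alpha$ relatively to $\mathcal E$ if $\mathbf K(\rho_{\langle x,y\rangle},\langle x,y\rangle,\{x,y\})\geq\alpha$ whenever $H\in\mathcal E$, $x\in H\setminus\{e\}$, $y\notin H$. *)

theory Defs
  imports "HOL-Analysis.Analysis" "HOL-Algebra.Generated_Groups"
begin

(* A countable group Gamma is represented (up to isomorphism) by a HOL-Algebra group
   whose carrier is a subset of nat. The separable infinite-dimensional real Hilbert
   space H is represented concretely as l^2(nat), so that an element f of l^2(Gamma,H)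
   is a function f :: nat => nat => real, f x n being the n-th coordinate of f(x),
   vanishing for x outside the carrier. *)

definition L2 :: "nat monoid \<Rightarrow> (nat \<Rightarrow> nat \<Rightarrow> real) set" where
  "L2 G = {f. (\<forall>x n. x \<notin> carrier G \<longrightarrow> f x n = 0) \<and>
              (\<lambda>(x, n). (f x n)\<^sup>2) summable_on (carrier G \<times> UNIV)}"

definition l2norm :: "nat monoid \<Rightarrow> (nat \<Rightarrow> nat \<Rightarrow> real) \<Rightarrow> real" where
  "l2norm G f = sqrt (\<Sum>\<^sub>\<infinity>(x, n)\<in>carrier G \<times> UNIV. (f x n)\<^sup>2)"

definition l2dist :: "nat monoid \<Rightarrow> (nat \<Rightarrow> nat \<Rightarrow> real) \<Rightarrow> (nat \<Rightarrow> nat \<Rightarrow> real) \<Rightarrow> real" where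
  "l2dist G f g = sqrt (\<Sum>\<^sub>\<infinity>(x, n)\<in>carrier G \<times> UNIV. (f x n - g x n)\<^sup>2)"

definition act :: "nat monoid \<Rightarrow> nat \<Rightarrow> (nat \<Rightarrow> nat \<Rightarrow> real) \<Rightarrow> (nat \<Rightarrow> nat \<Rightarrow> real)" where
  "act G \<gamma> f = (\<lambda>x n. if x \<in> carrier G then f (inv\<^bsub>G\<^esub> \<gamma> \<otimes>\<^bsub>G\<^esub> x) n else 0)"

definition Sph :: "nat monoid \<Rightarrow> (nat \<Rightarrow> nat \<Rightarrow> real) set" where
  "Sph G = {f \<in> L2 G. l2norm G f = 1}"

definition SphStar :: "nat monoid \<Rightarrow> (nat \<Rightarrow> nat \<Rightarrow> real) set" where
  "SphStar G = {f \<in> Sph G. \<forall>\<gamma>\<in>carrier G. \<gamma> \<noteq> \<one>\<^bsub>G\<^esub> \<longrightarrow> act G \<gamma> f \<noteq> f}"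

definition orb :: "nat monoid \<Rightarrow> (nat \<Rightarrow> nat \<Rightarrow> real) \<Rightarrow> (nat \<Rightarrow> nat \<Rightarrow> real) set" where
  "orb G f = (\<lambda>\<gamma>. act G \<gamma> f) ` carrier G"

definition Quot :: "nat monoid \<Rightarrow> (nat \<Rightarrow> nat \<Rightarrow> real) set set" where
  "Quot G = orb G ` SphStar G"

definition qdist :: "nat monoid \<Rightarrow> (nat \<Rightarrow> nat \<Rightarrow> real) set \<Rightarrow> (nat \<Rightarrow> nat \<Rightarrow> real) set \<Rightarrow> real" where
  "qdist G A B = Inf {l2dist G f g | f g. f \<in> A \<and> g \<in> B}"

definition STop :: "nat monoid \<Rightarrow> (nat \<Rightarrow> nat \<Rightarrow> real) topology" where
  "STop G = Metric_space.mtopology (SphStar G) (l2dist G)"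

definition QTop :: "nat monoid \<Rightarrow> (nat \<Rightarrow> nat \<Rightarrow> real) set topology" where
  "QTop G = Metric_space.mtopology (Quot G) (qdist G)"

definition thin :: "nat monoid \<Rightarrow> real \<Rightarrow> (nat \<Rightarrow> nat \<Rightarrow> real) set set" where
  "thin G \<delta> = orb G ` {x \<in> SphStar G. \<exists>\<gamma>\<in>carrier G - {\<one>\<^bsub>G\<^esub>}. l2dist G x (act G \<gamma> x) \<le> \<delta>}"

text \<open>K(rho_L, L, S) for the (real) regular representation of a subgroup L of G on l^2(L).\<close>
definition Kreg :: "nat monoid \<Rightarrow> nat set \<Rightarrow> nat set \<Rightarrow> real" where
  "Kreg G L S = Inf {Max ((\<lambda>s. sqrt (\<Sum>\<^sub>\<infinity>x\<in>L. (u (inv\<^bsub>G\<^esub> s \<otimes>\<^bsub>G\<^esub> x) - u x)\<^sup>2)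
                                   / sqrt (\<Sum>\<^sub>\<infinity>x\<in>L. (u x)\<^sup>2)) ` S)
                     | u. (\<forall>x. x \<notin> L \<longrightarrow> u x = 0) \<and> (\<lambda>x. (u x)\<^sup>2) summable_on L
                          \<and> (\<exists>x\<in>L. u x \<noteq> 0)}"

definition malnormal :: "nat monoid \<Rightarrow> nat set \<Rightarrow> bool" where
  "malnormal G H \<longleftrightarrow> (\<forall>g\<in>carrier G - H.
      {g \<otimes>\<^bsub>G\<^esub> h \<otimes>\<^bsub>G\<^esub> inv\<^bsub>G\<^esub> g | h. h \<in> H} \<inter> H = {\<one>\<^bsub>G\<^esub>})"

definition covering :: "nat monoid \<Rightarrow> nat set set \<Rightarrow> bool" where
  "covering G E \<longleftrightarrow> (\<forall>g\<in>carrier G. \<exists>H\<in>E. g \<in> H)"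

definition K_local_ge :: "nat monoid \<Rightarrow> nat set set \<Rightarrow> real \<Rightarrow> bool" where
  "K_local_ge G E \<alpha> \<longleftrightarrow> (\<forall>H\<in>E. \<forall>x\<in>H - {\<one>\<^bsub>G\<^esub>}. \<forall>y\<in>carrier G - H.
      Kreg G (generate G {x, y}) {x, y} \<ge> \<alpha>)"

end

theory Submission imports Defs begin

lemma sq_diff_summable:
  fixes f g :: "'a \<Rightarrow> real"
  assumes "(\<lambda>i. (f i)\<^sup>2) summable_on A" "(\<lambda>i. (g i)\<^sup>2) summable_on A"
  shows "(\<lambda>i. (f i - g i)\<^sup>2) summable_on A"
proof (rule summable_on_comparison_test)
  show "(\<lambda>i. 2 * (f i)\<^sup>2 + 2 * (g i)\<^sup>2) summable_on A"
    using assms by (intro summable_on_add summable_on_cmult_right) auto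
  fix i show "(f i - g i)\<^sup>2 \<le> 2 * (f i)\<^sup>2 + 2 * (g i)\<^sup>2"
    using zero_le_power2[of "f i + g i"] by (simp add: power2_eq_square algebra_simps)
  show "0 \<le> (f i - g i)\<^sup>2" by simp
qed

lemma l2_triangle:
  fixes f g h :: "'a \<Rightarrow> real"
  assumes f: "(\<lambda>i. (f i)\<^sup>2) summable_on A" and g: "(\<lambda>i. (g i)\<^sup>2) summable_on A"
    and h: "(\<lambda>i. (h i)\<^sup>2) summable_on A"
  shows "sqrt (\<Sum>\<^sub>\<infinity>i\<in>A. (f i - h i)\<^sup>2) \<le> sqrt (\<Sum>\<^sub>\<infinity>i\<in>A. (f i - g i)\<^sup>2) + sqrt (\<Sum>\<^sub>\<infinity>i\<in>A. (g i - h i)\<^sup>2)"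
proof -
  let ?R = "sqrt (\<Sum>\<^sub>\<infinity>i\<in>A. (f i - g i)\<^sup>2) + sqrt (\<Sum>\<^sub>\<infinity>i\<in>A. (g i - h i)\<^sup>2)"
  have sfg: "(\<lambda>i. (f i - g i)\<^sup>2) summable_on A" using sq_diff_summable[OF f g] .
  have sgh: "(\<lambda>i. (g i - h i)\<^sup>2) summable_on A" using sq_diff_summable[OF g h] .
  have sfh: "(\<lambda>i. (f i - h i)\<^sup>2) summable_on A" using sq_diff_summable[OF f h] .
  have R0: "0 \<le> ?R" by (intro add_nonneg_nonneg real_sqrt_ge_zero infsum_nonneg) auto
  have "(\<Sum>\<^sub>\<infinity>i\<in>A. (f i - h i)\<^sup>2) \<le> ?R\<^sup>2"
  proof (rule infsum_le_finite_sums[OF sfh])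
    fix F assume F: "finite F" "F \<subseteq> A"
    have "L2_set (\<lambda>i. f i - h i) F \<le> L2_set (\<lambda>i. f i - g i) F + L2_set (\<lambda>i. g i - h i) F"
      using L2_set_triangle_ineq[of "\<lambda>i. f i - g i" "\<lambda>i. g i - h i" F] by simp
    also have "L2_set (\<lambda>i. f i - g i) F \<le> sqrt (\<Sum>\<^sub>\<infinity>i\<in>A. (f i - g i)\<^sup>2)"
      unfolding L2_set_def by (intro real_sqrt_le_mono finite_sum_le_infsum[OF sfg F]) auto
    also have "L2_set (\<lambda>i. g i - h i) F \<le> sqrt (\<Sum>\<^sub>\<infinity>i\<in>A. (g i - h i)\<^sup>2)"
      unfolding L2_set_def by (intro real_sqrt_le_mono finite_sum_le_infsum[OF sgh F]) auto
    finally have "sqrt (\<Sum>i\<in>F. (f i - h i)\<^sup>2) \<le> ?R" unfolding L2_set_def by simp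
    then show "(\<Sum>i\<in>F. (f i - h i)\<^sup>2) \<le> ?R\<^sup>2"
    proof -
      have S0: "0 \<le> (\<Sum>i\<in>F. (f i - h i)\<^sup>2)" by (simp add: sum_nonneg)
      have "(\<Sum>i\<in>F. (f i - h i)\<^sup>2) = (sqrt (\<Sum>i\<in>F. (f i - h i)\<^sup>2))\<^sup>2" using S0 by simp
      also have "\<dots> \<le> ?R\<^sup>2" by (rule power_mono[OF \<open>sqrt _ \<le> ?R\<close>]) (simp add: sum_nonneg)
      finally show ?thesis .
    qed
  qed
  then show ?thesis using R0 real_sqrt_le_mono by fastforce
qed

lemma act_act:
  assumes "group G" "a \<in> carrier G" "b \<in> carrier G"
  shows "act G a (act G b f) = act G (a \<otimes>\<^bsub>G\<^esub> b) f"
proof -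
  interpret group G by fact
  show ?thesis unfolding act_def
    by (intro ext) (auto simp: assms inv_mult_group m_assoc)
qed

lemma act_one:
  assumes "group G" "\<forall>x n. x \<notin> carrier G \<longrightarrow> f x n = 0"
  shows "act G \<one>\<^bsub>G\<^esub> f = f"
proof -
  interpret group G by fact
  show ?thesis unfolding act_def using assms(2) by (intro ext) auto
qed

lemma bij_mul:
  assumes "group G" "b \<in> carrier G"
  shows "bij_betw (\<lambda>(x, n). (b \<otimes>\<^bsub>G\<^esub> x, n)) (carrier G \<times> (UNIV::nat set)) (carrier G \<times> UNIV)"
proof -
  interpret group G by fact
  show ?thesis
    by (rule bij_betw_byWitness[where f'="\<lambda>(x, n). (inv\<^bsub>G\<^esub> b \<otimes>\<^bsub>G\<^esub> x, n)"])
       (auto simp: assms m_assoc[symmetric])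
qed

lemma infsum_act:
  fixes F :: "nat \<times> nat \<Rightarrow> real"
  assumes "group G" "b \<in> carrier G"
  shows "(\<Sum>\<^sub>\<infinity>(x, n)\<in>carrier G \<times> UNIV. F (inv\<^bsub>G\<^esub> b \<otimes>\<^bsub>G\<^esub> x, n)) = (\<Sum>\<^sub>\<infinity>z\<in>carrier G \<times> UNIV. F z)"
    and "(\<lambda>(x, n). F (inv\<^bsub>G\<^esub> b \<otimes>\<^bsub>G\<^esub> x, n)) summable_on (carrier G \<times> UNIV) \<longleftrightarrow> F summable_on (carrier G \<times> UNIV)"
proof -
  interpret group G by fact
  have bij: "bij_betw (\<lambda>(x, n). (inv\<^bsub>G\<^esub> b \<otimes>\<^bsub>G\<^esub> x, n)) (carrier G \<times> (UNIV::nat set)) (carrier G \<times> UNIV)"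
    using bij_mul[OF assms(1), of "inv\<^bsub>G\<^esub> b"] assms by simp
  have eq: "(\<lambda>(x, n). F (inv\<^bsub>G\<^esub> b \<otimes>\<^bsub>G\<^esub> x, n)) = (\<lambda>z. F ((\<lambda>(x, n). (inv\<^bsub>G\<^esub> b \<otimes>\<^bsub>G\<^esub> x, n)) z))"
    by (auto simp: case_prod_unfold)
  show "(\<Sum>\<^sub>\<infinity>(x, n)\<in>carrier G \<times> UNIV. F (inv\<^bsub>G\<^esub> b \<otimes>\<^bsub>G\<^esub> x, n)) = (\<Sum>\<^sub>\<infinity>z\<in>carrier G \<times> UNIV. F z)"
    unfolding eq by (rule infsum_reindex_bij_betw[OF bij])
  show "(\<lambda>(x, n). F (inv\<^bsub>G\<^esub> b \<otimes>\<^bsub>G\<^esub> x, n)) summable_on (carrier G \<times> UNIV) \<longleftrightarrow> F summable_on (carrier G \<times> UNIV)"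
    unfolding eq by (rule summable_on_reindex_bij_betw[OF bij])
qed

lemma act_apply:
  "x \<in> carrier G \<Longrightarrow> act G b f x n = f (inv\<^bsub>G\<^esub> b \<otimes>\<^bsub>G\<^esub> x) n"
  by (simp add: act_def)

lemma l2dist_act:
  assumes "group G" "b \<in> carrier G"
  shows "l2dist G (act G b f) (act G b h) = l2dist G f h"
proof -
  have "(\<Sum>\<^sub>\<infinity>(x, n)\<in>carrier G \<times> UNIV. (act G b f x n - act G b h x n)\<^sup>2)
      = (\<Sum>\<^sub>\<infinity>(x, n)\<in>carrier G \<times> UNIV. (\<lambda>(y, m). (f y m - h y m)\<^sup>2) (inv\<^bsub>G\<^esub> b \<otimes>\<^bsub>G\<^esub> x, n))"
    by (intro infsum_cong) (auto simp: act_apply)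
  also have "\<dots> = (\<Sum>\<^sub>\<infinity>(y, m)\<in>carrier G \<times> UNIV. (f y m - h y m)\<^sup>2)"
    by (rule infsum_act(1)[OF assms])
  finally show ?thesis unfolding l2dist_def by simp
qed

lemma act_L2:
  assumes "group G" "b \<in> carrier G" "f \<in> L2 G"
  shows "act G b f \<in> L2 G"
proof -
  have "(\<lambda>(x, n). (act G b f x n)\<^sup>2) summable_on carrier G \<times> UNIV
     \<longleftrightarrow> (\<lambda>(x, n). (\<lambda>(y, m). (f y m)\<^sup>2) (inv\<^bsub>G\<^esub> b \<otimes>\<^bsub>G\<^esub> x, n)) summable_on carrier G \<times> UNIV"
    by (intro summable_on_cong) (auto simp: act_apply)
  also have "\<dots> \<longleftrightarrow> (\<lambda>(y, m). (f y m)\<^sup>2) summable_on carrier G \<times> UNIV"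
    by (rule infsum_act(2)[OF assms(1,2)])
  finally show ?thesis using assms(3) unfolding L2_def by (auto simp: act_def)
qed

lemma l2dist_triangle:
  assumes "f \<in> L2 G" "g \<in> L2 G" "h \<in> L2 G"
  shows "l2dist G f h \<le> l2dist G f g + l2dist G g h"
  using l2_triangle[of "\<lambda>(x, n). f x n" "carrier G \<times> UNIV" "\<lambda>(x, n). g x n" "\<lambda>(x, n). h x n"] assms
  unfolding l2dist_def L2_def by (simp add: case_prod_unfold)

lemma l2dist_commute: "l2dist G f g = l2dist G g f"
  unfolding l2dist_def by (simp add: power2_commute)

lemma l2dist_nonneg: "0 \<le> l2dist G f g"
  unfolding l2dist_def by (intro real_sqrt_ge_zero infsum_nonneg) auto

lemma l2dist_zero:
  assumes "f \<in> L2 G" "g \<in> L2 G" "l2dist G f g = 0"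
  shows "f = g"
proof (intro ext)
  fix x n
  have s: "(\<lambda>z. (f (fst z) (snd z) - g (fst z) (snd z))\<^sup>2) summable_on carrier G \<times> UNIV"
    using sq_diff_summable[of "\<lambda>z. f (fst z) (snd z)" "carrier G \<times> UNIV" "\<lambda>z. g (fst z) (snd z)"] assms(1,2)
    unfolding L2_def by (simp add: case_prod_unfold)
  have z: "(\<Sum>\<^sub>\<infinity>z\<in>carrier G \<times> UNIV. (f (fst z) (snd z) - g (fst z) (snd z))\<^sup>2) \<le> 0"
    using assms(3) unfolding l2dist_def by (simp add: case_prod_unfold)
  show "f x n = g x n"
  proof (cases "x \<in> carrier G")
    case True
    have "(f x n - g x n)\<^sup>2 = 0"
      using nonneg_infsum_le_0D[OF z s, of "(x, n)"] True by simp
    then show ?thesis by simp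
  next
    case False then show ?thesis using assms(1,2) unfolding L2_def by auto
  qed
qed

lemma l2_metric:
  assumes "M \<subseteq> L2 G"
  shows "Metric_space M (l2dist G)"
proof
  fix x y z
  show "0 \<le> l2dist G x y" by (rule l2dist_nonneg)
  show "l2dist G x y = l2dist G y x" by (rule l2dist_commute)
  show "x \<in> M \<Longrightarrow> y \<in> M \<Longrightarrow> (l2dist G x y = 0) = (x = y)"
    using assms l2dist_zero[of x G y] by (auto simp: l2dist_def case_prod_unfold)
  show "x \<in> M \<Longrightarrow> y \<in> M \<Longrightarrow> z \<in> M \<Longrightarrow> l2dist G x z \<le> l2dist G x y + l2dist G y z"
    using assms l2dist_triangle by blast
qed

lemma slice_summable:
  fixes F :: "'a \<times> 'b \<Rightarrow> real"
  assumes "F summable_on A \<times> B" "n \<in> B" "C \<subseteq> A"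
  shows "(\<lambda>g. F (g, n)) summable_on C"
proof -
  have "F summable_on (\<lambda>g. (g, n)) ` C"
    by (rule summable_on_subset[OF assms(1)]) (use assms in auto)
  then have "(F \<circ> (\<lambda>g. (g, n))) summable_on C"
    by (subst summable_on_reindex[symmetric]) (auto simp: inj_on_def)
  then show ?thesis by (simp add: o_def)
qed

lemma coset_partition:
  fixes F :: "nat \<times> nat \<Rightarrow> real"
  assumes grp: "group G" and sg: "subgroup L G" and sF: "F summable_on carrier G \<times> UNIV"
  shows "infsum F (carrier G \<times> UNIV) = (\<Sum>\<^sub>\<infinity>(C, n)\<in>(rcosets\<^bsub>G\<^esub> L) \<times> UNIV. \<Sum>\<^sub>\<infinity>g\<in>C. F (g, n))"
    and "(\<lambda>(C, n). \<Sum>\<^sub>\<infinity>g\<in>C. F (g, n)) summable_on ((rcosets\<^bsub>G\<^esub> L) \<times> UNIV)"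
proof -
  interpret group G by fact
  define I where "I = (rcosets\<^bsub>G\<^esub> L) \<times> (UNIV :: nat set)"
  define B where "B = (\<lambda>(C :: nat set, n :: nat). C)"
  define k where "k = (\<lambda>((C :: nat set, n :: nat), g :: nat). (g, n))"
  have disj: "pairwise disjnt (rcosets\<^bsub>G\<^esub> L)" by (rule rcos_disjoint[OF sg])
  have part: "\<Union>(rcosets\<^bsub>G\<^esub> L) = carrier G" by (rule rcosets_part_G[OF sg])
  have bij: "bij_betw k (Sigma I B) (carrier G \<times> UNIV)"
  proof (rule bij_betwI')
    fix z w assume z: "z \<in> Sigma I B" and w: "w \<in> Sigma I B"
    obtain C n g where zz: "z = ((C, n), g)" by (metis prod.collapse)
    obtain C' n' g' where ww: "w = ((C', n'), g')" by (metis prod.collapse)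
    show "(k z = k w) = (z = w)"
    proof
      assume "k z = k w"
      then have e: "g = g'" "n = n'" using zz ww by (auto simp: k_def)
      have "C \<in> rcosets\<^bsub>G\<^esub> L" "C' \<in> rcosets\<^bsub>G\<^esub> L" "g \<in> C" "g' \<in> C'"
        using z w zz ww by (auto simp: I_def B_def)
      then have "C = C'" using disj e unfolding pairwise_def disjnt_def by blast
      then show "z = w" using zz ww e by simp
    qed simp
  next
    fix z assume z: "z \<in> Sigma I B"
    obtain C n g where zz: "z = ((C, n), g)" by (metis prod.collapse)
    have "C \<in> rcosets\<^bsub>G\<^esub> L" "g \<in> C" using z zz by (auto simp: I_def B_def)
    then have "g \<in> carrier G" using part by blast
    then show "k z \<in> carrier G \<times> UNIV" using zz by (simp add: k_def)
  next
    fix y assume y: "y \<in> carrier G \<times> (UNIV :: nat set)"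
    obtain g n where yy: "y = (g, n)" by (metis prod.collapse)
    have g: "g \<in> carrier G" using y yy by simp
    have "L #>\<^bsub>G\<^esub> g \<in> rcosets\<^bsub>G\<^esub> L" using rcosetsI[OF subgroup.subset[OF sg] g] .
    moreover have "g \<in> L #>\<^bsub>G\<^esub> g" using rcos_self[OF g sg] .
    ultimately have "((L #>\<^bsub>G\<^esub> g, n), g) \<in> Sigma I B" by (simp add: I_def B_def)
    moreover have "y = k ((L #>\<^bsub>G\<^esub> g, n), g)" using yy by (simp add: k_def)
    ultimately show "\<exists>x\<in>Sigma I B. y = k x" by blast
  qed
  have s1: "(\<lambda>z. F (k z)) summable_on Sigma I B"
    using summable_on_reindex_bij_betw[OF bij, of F] sF by simp
  have e1: "infsum F (carrier G \<times> UNIV) = infsum (\<lambda>z. F (k z)) (Sigma I B)"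
    using infsum_reindex_bij_betw[OF bij, of F] by simp
  have e2: "infsum (\<lambda>x. infsum (\<lambda>y. F (k (x, y))) (B x)) I = infsum (\<lambda>z. F (k z)) (Sigma I B)"
    by (rule infsum_Sigma_banach) (use s1 in simp)
  have s2: "(\<lambda>x. infsum (\<lambda>y. F (k (x, y))) (B x)) summable_on I"
    using summable_on_Sigma_banach[of "\<lambda>x y. F (k (x, y))" I B] s1 by (simp add: case_prod_unfold)
  have eqf: "(\<lambda>x. infsum (\<lambda>y. F (k (x, y))) (B x)) = (\<lambda>(C, n). \<Sum>\<^sub>\<infinity>g\<in>C. F (g, n))"
    by (auto simp: k_def B_def)
  show "infsum F (carrier G \<times> UNIV) = (\<Sum>\<^sub>\<infinity>(C, n)\<in>(rcosets\<^bsub>G\<^esub> L) \<times> UNIV. \<Sum>\<^sub>\<infinity>g\<in>C. F (g, n))"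
    using e1 e2 eqf by (simp add: I_def)
  show "(\<lambda>(C, n). \<Sum>\<^sub>\<infinity>g\<in>C. F (g, n)) summable_on ((rcosets\<^bsub>G\<^esub> L) \<times> UNIV)"
    using s2 eqf by (simp add: I_def)
qed

lemma Dsum:
  assumes grp: "group G" and a: "a \<in> carrier G" and x: "x \<in> L2 G"
  shows "(\<lambda>(g, n). (x (inv\<^bsub>G\<^esub> a \<otimes>\<^bsub>G\<^esub> g) n - x g n)\<^sup>2) summable_on carrier G \<times> UNIV"
proof -
  have sx: "(\<lambda>(y, m). (x y m)\<^sup>2) summable_on carrier G \<times> UNIV" using x by (simp add: L2_def)
  have 1: "(\<lambda>(g, n). (\<lambda>(y, m). (x y m)\<^sup>2) (inv\<^bsub>G\<^esub> a \<otimes>\<^bsub>G\<^esub> g, n)) summable_on carrier G \<times> UNIV"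
    using infsum_act(2)[OF grp a, of "\<lambda>(y, m). (x y m)\<^sup>2"] sx by simp
  show ?thesis
    using sq_diff_summable[of "\<lambda>z. x (inv\<^bsub>G\<^esub> a \<otimes>\<^bsub>G\<^esub> fst z) (snd z)" "carrier G \<times> UNIV" "\<lambda>z. x (fst z) (snd z)"] 1 sx
    by (simp add: case_prod_unfold)
qed

lemma slice_ineq:
  assumes grp: "group G" and sg: "subgroup L G" and aL: "a \<in> L" and bL: "b \<in> L"
    and K: "\<alpha> \<le> Kreg G L {a, b}" and apos: "\<alpha> > 0" and c: "c \<in> carrier G" and x: "x \<in> L2 G"
  shows "\<alpha>\<^sup>2 * (\<Sum>\<^sub>\<infinity>g\<in>L #>\<^bsub>G\<^esub> c. (x g n)\<^sup>2)
     \<le> (\<Sum>\<^sub>\<infinity>g\<in>L #>\<^bsub>G\<^esub> c. (x (inv\<^bsub>G\<^esub> a \<otimes>\<^bsub>G\<^esub> g) n - x g n)\<^sup>2 + (x (inv\<^bsub>G\<^esub> b \<otimes>\<^bsub>G\<^esub> g) n - x g n)\<^sup>2)"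
proof -
  interpret group G by fact
  have LG: "L \<subseteq> carrier G" using subgroup.subset[OF sg] .
  have aG: "a \<in> carrier G" and bG: "b \<in> carrier G" using aL bL LG by auto
  define C where "C = L #>\<^bsub>G\<^esub> c"
  have CG: "C \<subseteq> carrier G" unfolding C_def using r_coset_subset_G[OF LG c] .
  have bijc: "bij_betw (\<lambda>l. l \<otimes>\<^bsub>G\<^esub> c) L C"
    unfolding bij_betw_def C_def
  proof
    show "inj_on (\<lambda>l. l \<otimes>\<^bsub>G\<^esub> c) L"
    proof (rule inj_onI)
      fix l l' assume "l \<in> L" "l' \<in> L" "l \<otimes>\<^bsub>G\<^esub> c = l' \<otimes>\<^bsub>G\<^esub> c"
      then show "l = l'" using LG c right_cancel by (meson subsetD)
    qed
    show "(\<lambda>l. l \<otimes>\<^bsub>G\<^esub> c) ` L = L #>\<^bsub>G\<^esub> c" unfolding r_coset_def by auto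
  qed
  have sx: "(\<lambda>(y, m). (x y m)\<^sup>2) summable_on carrier G \<times> UNIV" using x by (simp add: L2_def)
  have sN: "(\<lambda>g. (x g n)\<^sup>2) summable_on C"
    using slice_summable[OF sx _ CG, of n] by simp
  have sA: "(\<lambda>g. (x (inv\<^bsub>G\<^esub> a \<otimes>\<^bsub>G\<^esub> g) n - x g n)\<^sup>2) summable_on C"
    using slice_summable[OF Dsum[OF grp aG x] _ CG, of n] by simp
  have sB: "(\<lambda>g. (x (inv\<^bsub>G\<^esub> b \<otimes>\<^bsub>G\<^esub> g) n - x g n)\<^sup>2) summable_on C"
    using slice_summable[OF Dsum[OF grp bG x] _ CG, of n] by simp
  define u where "u = (\<lambda>l. if l \<in> L then x (l \<otimes>\<^bsub>G\<^esub> c) n else 0)"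
  define D where "D = (\<lambda>s. \<Sum>\<^sub>\<infinity>l\<in>L. (u (inv\<^bsub>G\<^esub> s \<otimes>\<^bsub>G\<^esub> l) - u l)\<^sup>2)"
  define N where "N = (\<Sum>\<^sub>\<infinity>l\<in>L. (u l)\<^sup>2)"
  have eN: "(\<Sum>\<^sub>\<infinity>g\<in>C. (x g n)\<^sup>2) = N"
  proof -
    have "(\<Sum>\<^sub>\<infinity>g\<in>C. (x g n)\<^sup>2) = (\<Sum>\<^sub>\<infinity>l\<in>L. (x (l \<otimes>\<^bsub>G\<^esub> c) n)\<^sup>2)"
      using infsum_reindex_bij_betw[OF bijc, of "\<lambda>g. (x g n)\<^sup>2"] by simp
    also have "\<dots> = N" unfolding N_def u_def by (intro infsum_cong) auto
    finally show ?thesis .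
  qed
  have sU: "(\<lambda>l. (u l)\<^sup>2) summable_on L"
  proof -
    have "(\<lambda>l. (x (l \<otimes>\<^bsub>G\<^esub> c) n)\<^sup>2) summable_on L"
      using summable_on_reindex_bij_betw[OF bijc, of "\<lambda>g. (x g n)\<^sup>2"] sN by simp
    then show ?thesis unfolding u_def by (rule summable_on_cong[THEN iffD1, rotated]) auto
  qed
  have eD: "(\<Sum>\<^sub>\<infinity>g\<in>C. (x (inv\<^bsub>G\<^esub> s \<otimes>\<^bsub>G\<^esub> g) n - x g n)\<^sup>2) = D s" if sL: "s \<in> L" for s
  proof -
    have sG: "s \<in> carrier G" using sL LG by auto
    have "(\<Sum>\<^sub>\<infinity>g\<in>C. (x (inv\<^bsub>G\<^esub> s \<otimes>\<^bsub>G\<^esub> g) n - x g n)\<^sup>2)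
        = (\<Sum>\<^sub>\<infinity>l\<in>L. (x (inv\<^bsub>G\<^esub> s \<otimes>\<^bsub>G\<^esub> (l \<otimes>\<^bsub>G\<^esub> c)) n - x (l \<otimes>\<^bsub>G\<^esub> c) n)\<^sup>2)"
      using infsum_reindex_bij_betw[OF bijc, of "\<lambda>g. (x (inv\<^bsub>G\<^esub> s \<otimes>\<^bsub>G\<^esub> g) n - x g n)\<^sup>2"] by simp
    also have "\<dots> = D s" unfolding D_def u_def
    proof (intro infsum_cong)
      fix l assume lL: "l \<in> L"
      have "inv\<^bsub>G\<^esub> s \<otimes>\<^bsub>G\<^esub> l \<in> L"
        using sL lL sg by (simp add: subgroup.m_closed subgroup.m_inv_closed)
      moreover have "inv\<^bsub>G\<^esub> s \<otimes>\<^bsub>G\<^esub> (l \<otimes>\<^bsub>G\<^esub> c) = (inv\<^bsub>G\<^esub> s \<otimes>\<^bsub>G\<^esub> l) \<otimes>\<^bsub>G\<^esub> c"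
        using sG lL LG c by (auto simp: m_assoc)
      ultimately show "(x (inv\<^bsub>G\<^esub> s \<otimes>\<^bsub>G\<^esub> (l \<otimes>\<^bsub>G\<^esub> c)) n - x (l \<otimes>\<^bsub>G\<^esub> c) n)\<^sup>2 =
          ((if inv\<^bsub>G\<^esub> s \<otimes>\<^bsub>G\<^esub> l \<in> L then x ((inv\<^bsub>G\<^esub> s \<otimes>\<^bsub>G\<^esub> l) \<otimes>\<^bsub>G\<^esub> c) n else 0) - (if l \<in> L then x (l \<otimes>\<^bsub>G\<^esub> c) n else 0))\<^sup>2"
        using lL by simp
    qed
    finally show ?thesis .
  qed
  have D0: "0 \<le> D s" for s unfolding D_def by (intro infsum_nonneg) auto
  have N0: "0 \<le> N" unfolding N_def by (intro infsum_nonneg) auto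
  have main: "\<alpha>\<^sup>2 * N \<le> D a + D b"
  proof (cases "\<forall>l\<in>L. u l = 0")
    case True
    then have "N = 0" unfolding N_def by (simp add: infsum_0)
    then show ?thesis using D0[of a] D0[of b] by simp
  next
    case False
    then obtain l0 where l0: "l0 \<in> L" "u l0 \<noteq> 0" by blast
    have "(u l0)\<^sup>2 \<le> N"
      using finite_sum_le_infsum[OF sU, of "{l0}"] l0 unfolding N_def by simp
    moreover have "(u l0)\<^sup>2 > 0" using l0 by simp
    ultimately have Npos: "N > 0" by linarith
    define r where "r = (\<lambda>s. sqrt (D s) / sqrt N)"
    have r0: "0 \<le> r s" for s unfolding r_def by (simp add: D0 N0)
    have uz: "\<forall>y. y \<notin> L \<longrightarrow> u y = 0" unfolding u_def by simp
    have mem: "Max (r ` {a, b}) \<in> {Max ((\<lambda>s. sqrt (\<Sum>\<^sub>\<infinity>x\<in>L. (u (inv\<^bsub>G\<^esub> s \<otimes>\<^bsub>G\<^esub> x) - u x)\<^sup>2)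
                                   / sqrt (\<Sum>\<^sub>\<infinity>x\<in>L. (u x)\<^sup>2)) ` {a, b})
                     | u. (\<forall>x. x \<notin> L \<longrightarrow> u x = 0) \<and> (\<lambda>x. (u x)\<^sup>2) summable_on L
                          \<and> (\<exists>x\<in>L. u x \<noteq> 0)}"
      using uz sU l0 unfolding r_def D_def N_def by blast
    have bdd: "bdd_below {Max ((\<lambda>s. sqrt (\<Sum>\<^sub>\<infinity>x\<in>L. (u (inv\<^bsub>G\<^esub> s \<otimes>\<^bsub>G\<^esub> x) - u x)\<^sup>2)
                                   / sqrt (\<Sum>\<^sub>\<infinity>x\<in>L. (u x)\<^sup>2)) ` {a, b})
                     | u. (\<forall>x. x \<notin> L \<longrightarrow> u x = 0) \<and> (\<lambda>x. (u x)\<^sup>2) summable_on L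
                          \<and> (\<exists>x\<in>L. u x \<noteq> 0)}"
    proof (rule bdd_belowI[where m=0], clarify)
      fix v :: "nat \<Rightarrow> real"
      let ?f = "\<lambda>s. sqrt (\<Sum>\<^sub>\<infinity>x\<in>L. (v (inv\<^bsub>G\<^esub> s \<otimes>\<^bsub>G\<^esub> x) - v x)\<^sup>2) / sqrt (\<Sum>\<^sub>\<infinity>x\<in>L. (v x)\<^sup>2)"
      have "?f a \<le> Max (?f ` {a, b})" by (rule Max_ge) auto
      moreover have "0 \<le> ?f a"
        by (intro divide_nonneg_nonneg real_sqrt_ge_zero infsum_nonneg) auto
      ultimately show "0 \<le> Max (?f ` {a, b})" by linarith
    qed
    have "Kreg G L {a, b} \<le> Max (r ` {a, b})"
      unfolding Kreg_def by (rule cInf_lower[OF mem bdd])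
    with K have aM: "\<alpha> \<le> Max (r ` {a, b})" by linarith
    have "Max (r ` {a, b}) \<in> r ` {a, b}" by (rule Max_in) auto
    then obtain s where s: "s \<in> {a, b}" "\<alpha> \<le> r s" using aM by (metis imageE)
    have "\<alpha> * sqrt N \<le> sqrt (D s)"
      using s(2) Npos unfolding r_def by (simp add: pos_le_divide_eq)
    then have "(\<alpha> * sqrt N)\<^sup>2 \<le> (sqrt (D s))\<^sup>2"
      by (rule power_mono) (use apos N0 in simp)
    then have "\<alpha>\<^sup>2 * N \<le> D s" using N0 D0[of s] by (simp add: power_mult_distrib)
    then show ?thesis using s(1) D0[of a] D0[of b] by auto
  qed
  have "(\<Sum>\<^sub>\<infinity>g\<in>C. (x (inv\<^bsub>G\<^esub> a \<otimes>\<^bsub>G\<^esub> g) n - x g n)\<^sup>2 + (x (inv\<^bsub>G\<^esub> b \<otimes>\<^bsub>G\<^esub> g) n - x g n)\<^sup>2)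
      = D a + D b"
    using infsum_add[OF sA sB] eD[OF aL] eD[OF bL] by simp
  then show ?thesis using main eN unfolding C_def by simp
qed

lemma key:
  assumes grp: "group G" and sg: "subgroup L G" and aL: "a \<in> L" and bL: "b \<in> L"
    and K: "\<alpha> \<le> Kreg G L {a, b}" and apos: "\<alpha> > 0" and x: "x \<in> L2 G" and nx: "l2norm G x = 1"
  shows "\<alpha>\<^sup>2 \<le> (l2dist G x (act G a x))\<^sup>2 + (l2dist G x (act G b x))\<^sup>2"
proof -
  interpret group G by fact
  have LG: "L \<subseteq> carrier G" using subgroup.subset[OF sg] .
  have aG: "a \<in> carrier G" and bG: "b \<in> carrier G" using aL bL LG by auto
  define Fa where "Fa = (\<lambda>(g, n). (x (inv\<^bsub>G\<^esub> a \<otimes>\<^bsub>G\<^esub> g) n - x g n)\<^sup>2)"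
  define Fb where "Fb = (\<lambda>(g, n). (x (inv\<^bsub>G\<^esub> b \<otimes>\<^bsub>G\<^esub> g) n - x g n)\<^sup>2)"
  define Nf where "Nf = (\<lambda>(g::nat, n::nat). (x g n)\<^sup>2)"
  define I where "I = (rcosets\<^bsub>G\<^esub> L) \<times> (UNIV :: nat set)"
  have sA: "Fa summable_on carrier G \<times> UNIV" unfolding Fa_def by (rule Dsum[OF grp aG x])
  have sB: "Fb summable_on carrier G \<times> UNIV" unfolding Fb_def by (rule Dsum[OF grp bG x])
  have sN: "Nf summable_on carrier G \<times> UNIV" using x unfolding Nf_def L2_def by simp
  have dist_eq: "(l2dist G x (act G s x))\<^sup>2 = (\<Sum>\<^sub>\<infinity>(g, n)\<in>carrier G \<times> UNIV. (x (inv\<^bsub>G\<^esub> s \<otimes>\<^bsub>G\<^esub> g) n - x g n)\<^sup>2)" for s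
  proof -
    have "(\<Sum>\<^sub>\<infinity>(g, n)\<in>carrier G \<times> UNIV. (x g n - act G s x g n)\<^sup>2)
        = (\<Sum>\<^sub>\<infinity>(g, n)\<in>carrier G \<times> UNIV. (x (inv\<^bsub>G\<^esub> s \<otimes>\<^bsub>G\<^esub> g) n - x g n)\<^sup>2)"
      by (intro infsum_cong) (auto simp: act_apply power2_commute)
    moreover have "0 \<le> (\<Sum>\<^sub>\<infinity>(g, n)\<in>carrier G \<times> UNIV. (x (inv\<^bsub>G\<^esub> s \<otimes>\<^bsub>G\<^esub> g) n - x g n)\<^sup>2)"
      by (intro infsum_nonneg) auto
    ultimately show ?thesis unfolding l2dist_def by simp
  qed
  have n1: "infsum Nf (carrier G \<times> UNIV) = 1"
  proof -
    have "0 \<le> infsum Nf (carrier G \<times> UNIV)" unfolding Nf_def by (intro infsum_nonneg) auto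
    moreover have "sqrt (infsum Nf (carrier G \<times> UNIV)) = 1" using nx unfolding l2norm_def Nf_def by simp
    ultimately show ?thesis by simp
  qed
  define F where "F = (\<lambda>z. Fa z + Fb z)"
  have sF: "F summable_on carrier G \<times> UNIV" unfolding F_def using summable_on_add[OF sA sB] .
  have eF: "infsum F (carrier G \<times> UNIV) = infsum Fa (carrier G \<times> UNIV) + infsum Fb (carrier G \<times> UNIV)"
    unfolding F_def by (rule infsum_add[OF sA sB])
  have pF: "infsum F (carrier G \<times> UNIV) = (\<Sum>\<^sub>\<infinity>(C, n)\<in>I. \<Sum>\<^sub>\<infinity>g\<in>C. F (g, n))"
    and psF: "(\<lambda>(C, n). \<Sum>\<^sub>\<infinity>g\<in>C. F (g, n)) summable_on I"
    using coset_partition[OF grp sg sF] unfolding I_def by auto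
  have pN: "infsum Nf (carrier G \<times> UNIV) = (\<Sum>\<^sub>\<infinity>(C, n)\<in>I. \<Sum>\<^sub>\<infinity>g\<in>C. Nf (g, n))"
    and psN: "(\<lambda>(C, n). \<Sum>\<^sub>\<infinity>g\<in>C. Nf (g, n)) summable_on I"
    using coset_partition[OF grp sg sN] unfolding I_def by auto
  have "\<alpha>\<^sup>2 * infsum Nf (carrier G \<times> UNIV) = (\<Sum>\<^sub>\<infinity>z\<in>I. \<alpha>\<^sup>2 * (\<lambda>(C, n). \<Sum>\<^sub>\<infinity>g\<in>C. Nf (g, n)) z)"
    unfolding pN by (rule infsum_cmult_right'[symmetric])
  also have "\<dots> \<le> (\<Sum>\<^sub>\<infinity>z\<in>I. (\<lambda>(C, n). \<Sum>\<^sub>\<infinity>g\<in>C. F (g, n)) z)"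
  proof (rule infsum_mono)
    show "(\<lambda>z. \<alpha>\<^sup>2 * (\<lambda>(C, n). \<Sum>\<^sub>\<infinity>g\<in>C. Nf (g, n)) z) summable_on I"
      by (rule summable_on_cmult_right[OF psN])
    show "(\<lambda>(C, n). \<Sum>\<^sub>\<infinity>g\<in>C. F (g, n)) summable_on I" by (rule psF)
    fix z assume z: "z \<in> I"
    obtain C n where zz: "z = (C, n)" by (metis prod.collapse)
    have "C \<in> rcosets\<^bsub>G\<^esub> L" using z zz by (simp add: I_def)
    then obtain c where c: "c \<in> carrier G" "C = L #>\<^bsub>G\<^esub> c" unfolding RCOSETS_def by auto
    show "\<alpha>\<^sup>2 * (\<lambda>(C, n). \<Sum>\<^sub>\<infinity>g\<in>C. Nf (g, n)) z \<le> (\<lambda>(C, n). \<Sum>\<^sub>\<infinity>g\<in>C. F (g, n)) z"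
      using slice_ineq[OF grp sg aL bL K apos c(1) x, of n] zz c(2)
      by (simp add: F_def Fa_def Fb_def Nf_def)
  qed
  also have "\<dots> = infsum Fa (carrier G \<times> UNIV) + infsum Fb (carrier G \<times> UNIV)"
    using pF eF by simp
  finally show ?thesis using n1 dist_eq[of a] dist_eq[of b] by (simp add: Fa_def Fb_def)
qed

lemma SphStar_L2: "SphStar G \<subseteq> L2 G"
  unfolding SphStar_def Sph_def by auto

lemma keyE:
  assumes grp: "group G" and HE: "H \<in> E" and sgH: "subgroup H G" and KE: "K_local_ge G E \<alpha>"
    and apos: "\<alpha> > 0" and a: "a \<in> H - {\<one>\<^bsub>G\<^esub>}" and b: "b \<in> carrier G - H" and x: "x \<in> SphStar G"
  shows "\<alpha>\<^sup>2 \<le> (l2dist G x (act G a x))\<^sup>2 + (l2dist G x (act G b x))\<^sup>2"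
proof -
  interpret group G by fact
  have aG: "a \<in> carrier G" using a subgroup.subset[OF sgH] by auto
  have sg: "subgroup (generate G {a, b}) G" using aG b by (intro generate_is_subgroup) auto
  have aL: "a \<in> generate G {a, b}" and bL: "b \<in> generate G {a, b}" by (auto intro: generate.incl)
  have K: "\<alpha> \<le> Kreg G (generate G {a, b}) {a, b}" using KE HE a b unfolding K_local_ge_def by blast
  have "x \<in> L2 G" "l2norm G x = 1" using x unfolding SphStar_def Sph_def by auto
  then show ?thesis using key[OF grp sg aL bL K apos] by blast
qed

lemma conj_short:
  assumes grp: "group G" and bG: "\<beta> \<in> carrier G" and gG: "g \<in> carrier G"
  shows "l2dist G (act G \<beta> x) (act G (\<beta> \<otimes>\<^bsub>G\<^esub> g \<otimes>\<^bsub>G\<^esub> inv\<^bsub>G\<^esub> \<beta>) (act G \<beta> x)) = l2dist G x (act G g x)"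
proof -
  interpret group G by fact
  have "act G (\<beta> \<otimes>\<^bsub>G\<^esub> g \<otimes>\<^bsub>G\<^esub> inv\<^bsub>G\<^esub> \<beta>) (act G \<beta> x) = act G (\<beta> \<otimes>\<^bsub>G\<^esub> g \<otimes>\<^bsub>G\<^esub> inv\<^bsub>G\<^esub> \<beta> \<otimes>\<^bsub>G\<^esub> \<beta>) x"
    using act_act[OF grp, of "\<beta> \<otimes>\<^bsub>G\<^esub> g \<otimes>\<^bsub>G\<^esub> inv\<^bsub>G\<^esub> \<beta>" \<beta> x] bG gG by simp
  also have "\<beta> \<otimes>\<^bsub>G\<^esub> g \<otimes>\<^bsub>G\<^esub> inv\<^bsub>G\<^esub> \<beta> \<otimes>\<^bsub>G\<^esub> \<beta> = \<beta> \<otimes>\<^bsub>G\<^esub> g"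
    using bG gG by (simp add: m_assoc)
  also have "act G (\<beta> \<otimes>\<^bsub>G\<^esub> g) x = act G \<beta> (act G g x)"
    using act_act[OF grp bG gG] by simp
  finally show ?thesis using l2dist_act[OF grp bG] by simp
qed

lemma conj_one:
  assumes grp: "group G" and bG: "\<beta> \<in> carrier G" and gG: "g \<in> carrier G"
    and e: "\<beta> \<otimes>\<^bsub>G\<^esub> g \<otimes>\<^bsub>G\<^esub> inv\<^bsub>G\<^esub> \<beta> = \<one>\<^bsub>G\<^esub>"
  shows "g = \<one>\<^bsub>G\<^esub>"
proof -
  interpret group G by fact
  have "\<beta> \<otimes>\<^bsub>G\<^esub> g = \<beta>"
    by (metis bG e gG inv_closed inv_inv l_inv_ex local.inv_equality m_closed)
  then show ?thesis using bG gG by simp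
qed

lemma short_of_thin:
  assumes grp: "group G" and y: "y \<in> SphStar G" and th: "orb G y \<in> thin G \<delta>"
  shows "\<exists>b\<in>carrier G - {\<one>\<^bsub>G\<^esub>}. l2dist G y (act G b y) \<le> \<delta>"
proof -
  interpret group G by fact
  obtain x g where x: "x \<in> SphStar G" and g: "g \<in> carrier G - {\<one>\<^bsub>G\<^esub>}" and dx: "l2dist G x (act G g x) \<le> \<delta>"
    and ox: "orb G y = orb G x"
    using th unfolding thin_def by auto
  have yz: "\<forall>z n. z \<notin> carrier G \<longrightarrow> y z n = 0" using y unfolding SphStar_def Sph_def L2_def by auto
  have "y \<in> orb G y" unfolding orb_def using act_one[OF grp yz] by force
  then obtain \<beta> where bG: "\<beta> \<in> carrier G" and yb: "y = act G \<beta> x" using ox unfolding orb_def by auto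
  define b where "b = \<beta> \<otimes>\<^bsub>G\<^esub> g \<otimes>\<^bsub>G\<^esub> inv\<^bsub>G\<^esub> \<beta>"
  have "b \<in> carrier G" using bG g unfolding b_def by simp
  moreover have "b \<noteq> \<one>\<^bsub>G\<^esub>" using conj_one[OF grp bG, of g] g unfolding b_def by auto
  moreover have "l2dist G y (act G b y) \<le> \<delta>"
    using conj_short[OF grp bG, of g x] g dx unfolding yb b_def by simp
  ultimately show ?thesis by blast
qed

lemma path_cont:
  assumes pq: "pathin (STop G) q"
  shows "\<And>t. t \<in> {0..1} \<Longrightarrow> q t \<in> SphStar G"
    and "\<And>t \<epsilon>. t \<in> {0..1} \<Longrightarrow> \<epsilon> > 0 \<Longrightarrow> \<exists>r>0. \<forall>t'\<in>{0..1}. \<bar>t' - t\<bar> < r \<longrightarrow> l2dist G (q t) (q t') < \<epsilon>"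
proof -
  interpret M: Metric_space "SphStar G" "l2dist G" by (rule l2_metric[OF SphStar_L2])
  have cm: "continuous_map (top_of_set {0..1}) M.mtopology q"
    using pq unfolding pathin_def STop_def by simp
  show qS: "q t \<in> SphStar G" if "t \<in> {0..1}" for t
    using continuous_map_image_subset_topspace[OF cm] that by auto
  fix t \<epsilon> :: real assume t: "t \<in> {0..1}" and e: "\<epsilon> > 0"
  have "openin (top_of_set {0..1}) {t' \<in> topspace (top_of_set {0..1}). q t' \<in> M.mball (q t) \<epsilon>}"
    by (rule openin_continuous_map_preimage[OF cm M.openin_mball])
  then have op: "openin (top_of_set {0..1}) {t' \<in> {0..1}. q t' \<in> M.mball (q t) \<epsilon>}" by simp
  have "t \<in> {t' \<in> {0..1}. q t' \<in> M.mball (q t) \<epsilon>}" using t e qS[OF t] by simp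
  then obtain r where r: "r > 0" "\<forall>t'\<in>{0..1}. dist t' t < r \<longrightarrow> t' \<in> {t' \<in> {0..1}. q t' \<in> M.mball (q t) \<epsilon>}"
    using op unfolding openin_euclidean_subtopology_iff by blast
  show "\<exists>r>0. \<forall>t'\<in>{0..1}. \<bar>t' - t\<bar> < r \<longrightarrow> l2dist G (q t) (q t') < \<epsilon>"
    using r by (auto simp: dist_real_def)
qed

lemma dtri:
  assumes grp: "group G" and y: "y \<in> SphStar G" and z: "z \<in> SphStar G" and b: "b \<in> carrier G"
  shows "l2dist G y (act G b y) \<le> l2dist G z (act G b z) + 2 * l2dist G z y"
proof -
  have yL: "y \<in> L2 G" and zL: "z \<in> L2 G" using y z SphStar_L2 by auto
  have byL: "act G b y \<in> L2 G" and bzL: "act G b z \<in> L2 G" using act_L2[OF grp b] yL zL by auto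
  have "l2dist G y (act G b y) \<le> l2dist G y z + l2dist G z (act G b y)"
    by (rule l2dist_triangle[OF yL zL byL])
  also have "l2dist G z (act G b y) \<le> l2dist G z (act G b z) + l2dist G (act G b z) (act G b y)"
    by (rule l2dist_triangle[OF zL bzL byL])
  also have "l2dist G (act G b z) (act G b y) = l2dist G z y" by (rule l2dist_act[OF grp b])
  finally show ?thesis using l2dist_commute[of G y z] by simp
qed

lemma main_fixed:
  assumes apos: "\<alpha> > 0" and grp: "group G" and HE: "\<forall>H\<in>E. subgroup H G \<and> malnormal G H"
    and cov: "covering G E" and KE: "K_local_ge G E \<alpha>"
    and R: "R \<in> path_components_of (subtopology (QTop G) (thin G (\<alpha> / 4)))" and r0: "r0 \<in> R"
    and x0: "x0 \<in> SphStar G" and ox0: "orb G x0 = r0"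
  shows "\<exists>H\<in>E. \<forall>p q \<gamma>.
                        pathin (subtopology (QTop G) R) p \<and> p 0 = r0 \<and> p 1 = r0
                        \<and> pathin (STop G) q \<and> (\<forall>t\<in>{0..1}. orb G (q t) = p t) \<and> q 0 = x0
                        \<and> \<gamma> \<in> carrier G \<and> q 1 = act G \<gamma> x0
                        \<longrightarrow> \<gamma> \<in> H"
proof -
  interpret group G by fact
  define \<delta> where "\<delta> = \<alpha> / 4"
  have Rth: "R \<subseteq> thin G \<delta>"
    using path_components_of_subset[OF R] unfolding \<delta>_def by auto
  obtain \<gamma>0 where g0: "\<gamma>0 \<in> carrier G - {\<one>\<^bsub>G\<^esub>}" and d0: "l2dist G x0 (act G \<gamma>0 x0) \<le> \<delta>"
    using short_of_thin[OF grp x0, of \<delta>] Rth r0 ox0 by auto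
  obtain H0 where H0: "H0 \<in> E" "\<gamma>0 \<in> H0" using cov g0 unfolding covering_def by auto
  have sgH: "subgroup H0 G" and mal: "malnormal G H0" using HE H0 by auto
  have HG: "H0 \<subseteq> carrier G" using subgroup.subset[OF sgH] .
  have keyH: "False" if "y \<in> SphStar G" "a \<in> H0 - {\<one>\<^bsub>G\<^esub>}" "b \<in> carrier G - H0"
      "l2dist G y (act G a y) < \<alpha> / 2" "l2dist G y (act G b y) < \<alpha> / 2" for y a b
  proof -
    have 1: "\<alpha>\<^sup>2 \<le> (l2dist G y (act G a y))\<^sup>2 + (l2dist G y (act G b y))\<^sup>2"
      by (rule keyE[OF grp H0(1) sgH KE apos that(2,3,1)])
    have "(l2dist G y (act G a y))\<^sup>2 < (\<alpha> / 2)\<^sup>2"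
      by (rule power_strict_mono) (use that l2dist_nonneg in auto)
    moreover have "(l2dist G y (act G b y))\<^sup>2 < (\<alpha> / 2)\<^sup>2"
      by (rule power_strict_mono) (use that l2dist_nonneg in auto)
    moreover have "\<alpha>\<^sup>2 > 0" using apos by simp
    ultimately show False using 1 by (simp add: power_divide)
  qed
  show ?thesis
  proof (intro bexI[OF _ H0(1)] allI impI)
    fix p q \<gamma>
    assume A: "pathin (subtopology (QTop G) R) p \<and> p 0 = r0 \<and> p 1 = r0
                        \<and> pathin (STop G) q \<and> (\<forall>t\<in>{0..1}. orb G (q t) = p t) \<and> q 0 = x0
                        \<and> \<gamma> \<in> carrier G \<and> q 1 = act G \<gamma> x0"
    have pp: "pathin (subtopology (QTop G) R) p" and pq: "pathin (STop G) q"
      and oq: "\<forall>t\<in>{0..1}. orb G (q t) = p t" and q0: "q 0 = x0" and gG: "\<gamma> \<in> carrier G"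
      and q1: "q 1 = act G \<gamma> x0" using A by auto
    have qS: "\<And>t. t \<in> {0..1} \<Longrightarrow> q t \<in> SphStar G" using path_cont(1)[OF pq] .
    have qc: "\<And>t \<epsilon>. t \<in> {0..1} \<Longrightarrow> \<epsilon> > 0 \<Longrightarrow> \<exists>r>0. \<forall>t'\<in>{0..1}. \<bar>t' - t\<bar> < r \<longrightarrow> l2dist G (q t) (q t') < \<epsilon>"
      using path_cont(2)[OF pq] .
    have pR: "p t \<in> R" if "t \<in> {0..1}" for t
      using continuous_map_image_subset_topspace[OF pp[unfolded pathin_def]] that by auto
    have sh: "\<exists>b\<in>carrier G - {\<one>\<^bsub>G\<^esub>}. l2dist G (q t) (act G b (q t)) \<le> \<delta>" if t: "t \<in> {0..1}" for t
      using short_of_thin[OF grp qS[OF t], of \<delta>] pR[OF t] oq t Rth by auto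
    define T where "T = {t \<in> {0..1}. \<exists>a\<in>H0 - {\<one>\<^bsub>G\<^esub>}. l2dist G (q t) (act G a (q t)) < \<alpha> / 2}"
    have opT: "openin (top_of_set {0..1}) T"
      unfolding openin_euclidean_subtopology_iff
    proof (intro conjI ballI)
      show "T \<subseteq> {0..1}" unfolding T_def by auto
      fix t assume tT: "t \<in> T"
      then obtain a where t01: "t \<in> {0..1}" and a: "a \<in> H0 - {\<one>\<^bsub>G\<^esub>}" and da: "l2dist G (q t) (act G a (q t)) < \<alpha> / 2"
        unfolding T_def by auto
      obtain r where r: "r > 0" "\<forall>t'\<in>{0..1}. \<bar>t' - t\<bar> < r \<longrightarrow> l2dist G (q t) (q t') < (\<alpha> / 2 - l2dist G (q t) (act G a (q t))) / 2"
        using qc[OF t01, of "(\<alpha> / 2 - l2dist G (q t) (act G a (q t))) / 2"] da by auto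
      show "\<exists>e>0. \<forall>x'\<in>{0..1}. dist x' t < e \<longrightarrow> x' \<in> T"
      proof (intro exI[of _ r] conjI ballI impI)
        fix t' assume t': "t' \<in> {0..1}" "dist t' t < r"
        have "l2dist G (q t') (act G a (q t')) \<le> l2dist G (q t) (act G a (q t)) + 2 * l2dist G (q t) (q t')"
          by (rule dtri[OF grp qS[OF t'(1)] qS[OF t01]]) (use a HG in auto)
        also have "\<dots> < \<alpha> / 2" using r t' by (auto simp: dist_real_def)
        finally show "t' \<in> T" unfolding T_def using t' a by auto
      qed (use r in auto)
    qed
    have opC: "openin (top_of_set {0..1}) ({0..1} - T)"
      unfolding openin_euclidean_subtopology_iff
    proof (intro conjI ballI)
      show "{0..1} - T \<subseteq> {0..1}" by auto
      fix t assume tC: "t \<in> {0..1} - T"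
      then have t01: "t \<in> {0..1}" and tn: "t \<notin> T" by auto
      obtain b where b: "b \<in> carrier G - {\<one>\<^bsub>G\<^esub>}" and db: "l2dist G (q t) (act G b (q t)) \<le> \<delta>"
        using sh[OF t01] by auto
      obtain r where r: "r > 0" "\<forall>t'\<in>{0..1}. \<bar>t' - t\<bar> < r \<longrightarrow> l2dist G (q t) (q t') < \<alpha> / 8"
        using qc[OF t01, of "\<alpha> / 8"] apos by auto
      show "\<exists>e>0. \<forall>x'\<in>{0..1}. dist x' t < e \<longrightarrow> x' \<in> {0..1} - T"
      proof (intro exI[of _ r] conjI ballI impI)
        fix t' assume t': "t' \<in> {0..1}" "dist t' t < r"
        have "l2dist G (q t') (act G b (q t')) \<le> l2dist G (q t) (act G b (q t)) + 2 * l2dist G (q t) (q t')"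
          by (rule dtri[OF grp qS[OF t'(1)] qS[OF t01]]) (use b in auto)
        also have "\<dots> < \<alpha> / 2" using r t' db unfolding \<delta>_def by (auto simp: dist_real_def)
        finally have db': "l2dist G (q t') (act G b (q t')) < \<alpha> / 2" .
        show "t' \<in> {0..1} - T"
        proof
          show "t' \<in> {0..1}" by (rule t'(1))
        next
          show "t' \<notin> T"
          proof
            assume "t' \<in> T"
            then obtain a where a: "a \<in> H0 - {\<one>\<^bsub>G\<^esub>}" and da: "l2dist G (q t') (act G a (q t')) < \<alpha> / 2"
              unfolding T_def by auto
            show False
            proof (cases "b \<in> H0")
              case True
              have "l2dist G (q t) (act G b (q t)) < \<alpha> / 2" using db apos unfolding \<delta>_def by simp
              then have "t \<in> T" unfolding T_def using t01 True b by auto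
              then show False using tn by simp
            next
              case False
              then show False using keyH[OF qS[OF t'(1)] a _ da db'] b by auto
            qed
          qed
        qed
      qed (use r in auto)
    qed
    have Tsub: "T \<subseteq> {0..1}" unfolding T_def by auto
    have clT: "closedin (top_of_set {0..1}) T"
      unfolding closedin_def using opC Tsub by simp
    have "l2dist G (q 0) (act G \<gamma>0 (q 0)) < \<alpha> / 2" using q0 d0 apos unfolding \<delta>_def by simp
    then have "0 \<in> T" unfolding T_def using g0 H0 by auto
    moreover have cc: "\<forall>S. openin (top_of_set {0..1::real}) S \<and> closedin (top_of_set {0..1}) S \<longrightarrow> S = {} \<or> S = {0..1}"
      using connected_clopen[of "{0..1::real}"] connected_Icc by blast
    ultimately have "T = {0..1}" using opT clT by blast
    then have "1 \<in> T" by simp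
    then obtain a1 where a1: "a1 \<in> H0 - {\<one>\<^bsub>G\<^esub>}" and da1: "l2dist G (q 1) (act G a1 (q 1)) < \<alpha> / 2"
      unfolding T_def by auto
    define \<gamma>1 where "\<gamma>1 = \<gamma> \<otimes>\<^bsub>G\<^esub> \<gamma>0 \<otimes>\<^bsub>G\<^esub> inv\<^bsub>G\<^esub> \<gamma>"
    have g1G: "\<gamma>1 \<in> carrier G" using gG g0 unfolding \<gamma>1_def by simp
    have d1: "l2dist G (q 1) (act G \<gamma>1 (q 1)) \<le> \<delta>"
      using conj_short[OF grp gG, of \<gamma>0 x0] g0 d0 q1 unfolding \<gamma>1_def by simp
    have g1H: "\<gamma>1 \<in> H0"
    proof (rule ccontr)
      assume "\<gamma>1 \<notin> H0"
      moreover have "l2dist G (q 1) (act G \<gamma>1 (q 1)) < \<alpha> / 2" using d1 apos unfolding \<delta>_def by simp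
      ultimately show False using keyH[OF qS[of 1] a1 _ da1] g1G by auto
    qed
    show "\<gamma> \<in> H0"
    proof (rule ccontr)
      assume ng: "\<gamma> \<notin> H0"
      then have "{\<gamma> \<otimes>\<^bsub>G\<^esub> h \<otimes>\<^bsub>G\<^esub> inv\<^bsub>G\<^esub> \<gamma> | h. h \<in> H0} \<inter> H0 = {\<one>\<^bsub>G\<^esub>}"
        using mal gG unfolding malnormal_def by auto
      moreover have "\<gamma>1 \<in> {\<gamma> \<otimes>\<^bsub>G\<^esub> h \<otimes>\<^bsub>G\<^esub> inv\<^bsub>G\<^esub> \<gamma> | h. h \<in> H0}" unfolding \<gamma>1_def using H0(2) by blast
      ultimately have "\<gamma>1 = \<one>\<^bsub>G\<^esub>" using g1H by blast
      then have "\<gamma>0 = \<one>\<^bsub>G\<^esub>" using conj_one[OF grp gG, of \<gamma>0] g0 unfolding \<gamma>1_def by auto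
      then show False using g0 by simp
    qed
  qed
qed

theorem lemma6p3:
  shows "\<forall>\<alpha>::real. \<alpha> > 0 \<longrightarrow> (\<exists>\<delta>::real. \<delta> > 0 \<and>
    (\<forall>(G::nat monoid) E.
       group G \<and> (\<forall>H\<in>E. subgroup H G \<and> malnormal G H) \<and> covering G E \<and> K_local_ge G E \<alpha>
       \<longrightarrow> (\<forall>R r0. R \<in> path_components_of (subtopology (QTop G) (thin G \<delta>)) \<and> r0 \<in> R
            \<longrightarrow> (\<forall>x0\<in>SphStar G. orb G x0 = r0
                 \<longrightarrow> (\<exists>H\<in>E. \<forall>p q \<gamma>.
                        pathin (subtopology (QTop G) R) p \<and> p 0 = r0 \<and> p 1 = r0
                        \<and> pathin (STop G) q \<and> (\<forall>t\<in>{0..1}. orb G (q t) = p t) \<and> q 0 = x0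
                        \<and> \<gamma> \<in> carrier G \<and> q 1 = act G \<gamma> x0
                        \<longrightarrow> \<gamma> \<in> H)))))"
proof (intro allI impI)
  fix \<alpha> :: real assume apos: "\<alpha> > 0"
  show "\<exists>\<delta>::real. \<delta> > 0 \<and>
    (\<forall>(G::nat monoid) E.
       group G \<and> (\<forall>H\<in>E. subgroup H G \<and> malnormal G H) \<and> covering G E \<and> K_local_ge G E \<alpha>
       \<longrightarrow> (\<forall>R r0. R \<in> path_components_of (subtopology (QTop G) (thin G \<delta>)) \<and> r0 \<in> R
            \<longrightarrow> (\<forall>x0\<in>SphStar G. orb G x0 = r0
                 \<longrightarrow> (\<exists>H\<in>E. \<forall>p q \<gamma>.
                        pathin (subtopology (QTop G) R) p \<and> p 0 = r0 \<and> p 1 = r0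
                        \<and> pathin (STop G) q \<and> (\<forall>t\<in>{0..1}. orb G (q t) = p t) \<and> q 0 = x0
                        \<and> \<gamma> \<in> carrier G \<and> q 1 = act G \<gamma> x0
                        \<longrightarrow> \<gamma> \<in> H))))"
  proof (intro exI[of _ "\<alpha> / 4"] conjI allI impI ballI)
    show "\<alpha> / 4 > 0" using apos by simp
    fix G :: "nat monoid" and E R r0 x0
    assume h1: "group G \<and> (\<forall>H\<in>E. subgroup H G \<and> malnormal G H) \<and> covering G E \<and> K_local_ge G E \<alpha>"
      and h2: "R \<in> path_components_of (subtopology (QTop G) (thin G (\<alpha> / 4))) \<and> r0 \<in> R"
      and h3: "x0 \<in> SphStar G" and h4: "orb G x0 = r0"
    show "\<exists>H\<in>E. \<forall>p q \<gamma>.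
                        pathin (subtopology (QTop G) R) p \<and> p 0 = r0 \<and> p 1 = r0
                        \<and> pathin (STop G) q \<and> (\<forall>t\<in>{0..1}. orb G (q t) = p t) \<and> q 0 = x0
                        \<and> \<gamma> \<in> carrier G \<and> q 1 = act G \<gamma> x0
                        \<longrightarrow> \<gamma> \<in> H"
      using h1 h2 by (intro main_fixed[OF apos _ _ _ _ _ _ h3 h4]) auto
  qed
qed

end
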